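(* The norm $A\mapsto n\,\omega(A)$ is the minimum element of the class of $M$-norms $\||\cdot\||$ on $\mathbb{M}_n$ satisfying $\|A\|_1\le\||A\||$ for all $A\in\mathbb{M}_n$.
   Context: $\mathbb{M}_n$ is the algebra of complex $n\times n$ matrices with identity $I$; $\|A\|_1=\mathrm{Tr}(|A|)$ is the trace norm and $\omega(A)=\sup\{|\langle x,Ax\rangle|:\|x\|=1\}$ the numerical radius. A norm $\||\cdot\||$ on $\mathbb{M}_n$ is an $M$-norm if $\left\||\sum_{i=1}^k C_i^*X_iC_i\right\||\le \max_{i}\||X_i\||$ for all $k$, all $X_i$ and all $C_i$ with $\sum_{i=1}^k C_i^*C_i=I$. *)

theory Defs
  imports "HOL-Analysis.Analysis"
begin

text \<open>Complex n x n matrices are modelled as complex^'n^'n, with n = CARD('n).\<close>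

definition cadj :: "complex^'n^'n \<Rightarrow> complex^'n^'n" where
  "cadj A = (\<chi> i j. cnj (A $ j $ i))"

definition cinner :: "complex^'n \<Rightarrow> complex^'n \<Rightarrow> complex" where
  "cinner x y = (\<Sum>i\<in>UNIV. cnj (x $ i) * y $ i)"

definition psd :: "complex^'n^'n \<Rightarrow> bool" where
  "psd P \<longleftrightarrow> cadj P = P \<and> (\<forall>x. Im (cinner x (P *v x)) = 0 \<and> 0 \<le> Re (cinner x (P *v x)))"

definition mabs :: "complex^'n^'n \<Rightarrow> complex^'n^'n" where
  "mabs A = (THE P. psd P \<and> P ** P = cadj A ** A)"

definition trace_norm :: "complex^'n^'n \<Rightarrow> real" where
  "trace_norm A = Re (trace (mabs A))"

definition numrad :: "complex^'n^'n \<Rightarrow> real" where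
  "numrad A = (SUP x\<in>{x::complex^'n. norm x = 1}. cmod (cinner x (A *v x)))"

definition is_matrix_norm :: "(complex^'n^'n \<Rightarrow> real) \<Rightarrow> bool" where
  "is_matrix_norm N \<longleftrightarrow>
     (\<forall>A. 0 \<le> N A) \<and> (\<forall>A. N A = 0 \<longleftrightarrow> A = 0) \<and>
     (\<forall>c::complex. \<forall>A. N (\<chi> i j. c * A $ i $ j) = cmod c * N A) \<and>
     (\<forall>A B. N (A + B) \<le> N A + N B)"

definition is_M_norm :: "(complex^'n^'n \<Rightarrow> real) \<Rightarrow> bool" where
  "is_M_norm N \<longleftrightarrow> is_matrix_norm N \<and>
     (\<forall>(k::nat) (X::nat \<Rightarrow> complex^'n^'n) (C::nat \<Rightarrow> complex^'n^'n).
        (\<Sum>i<k. cadj (C i) ** C i) = mat 1 \<longrightarrow>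
        N (\<Sum>i<k. cadj (C i) ** X i ** C i) \<le> Max ((\<lambda>i. N (X i)) ` {..<k}))"

end

theory Submission
  imports Defs
begin

lemma cinner_add_right: "cinner x (y + z) = cinner x y + cinner x z"
  by (simp add: cinner_def distrib_left sum.distrib)
lemma cinner_add_left: "cinner (x + y) z = cinner x z + cinner y z"
  by (simp add: cinner_def distrib_right sum.distrib)
lemma cinner_diff_right: "cinner x (y - z) = cinner x y - cinner x z"
  by (simp add: cinner_def right_diff_distrib sum_subtractf)
lemma cinner_diff_left: "cinner (x - y) z = cinner x z - cinner y z"
  by (simp add: cinner_def left_diff_distrib sum_subtractf)
lemma cinner_scale_right: "cinner x (c *s y) = c * cinner x y"
  by (simp add: cinner_def sum_distrib_left algebra_simps)
lemma cinner_scale_left: "cinner (c *s x) y = cnj c * cinner x y"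
  by (simp add: cinner_def sum_distrib_left algebra_simps)
lemma cinner_zero_right[simp]: "cinner x 0 = 0" by (simp add: cinner_def)
lemma cinner_zero_left[simp]: "cinner 0 x = 0" by (simp add: cinner_def)
lemma cinner_sum_right: "cinner x (sum f S) = (\<Sum>i\<in>S. cinner x (f i))"
  by (simp add: cinner_def sum_distrib_left sum.swap[of _ S])
lemma cinner_sum_left: "cinner (sum f S) y = (\<Sum>i\<in>S. cinner (f i) y)"
  by (simp add: cinner_def sum_distrib_right sum.swap[of _ S])
lemma cinner_commute: "cinner y x = cnj (cinner x y)"
  by (simp add: cinner_def mult.commute)

lemma Re_cinner: "Re (cinner x y) = inner x y"
  by (simp add: cinner_def inner_vec_def inner_complex_def Re_sum)
lemma cinner_self_real: "cinner x x = complex_of_real ((norm x)^2)"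
proof -
  have "Im (cinner x x) = 0" by (simp add: cinner_def Im_sum)
  moreover have "Re (cinner x x) = (norm x)^2" by (simp add: Re_cinner power2_norm_eq_inner)
  ultimately show ?thesis by (simp add: complex_eq_iff)
qed
lemma cinner_self_eq_0: "cinner x x = 0 \<longleftrightarrow> x = 0"
  by (simp add: cinner_self_real)

lemma cadj_cadj[simp]: "cadj (cadj A) = A"
  by (simp add: cadj_def vec_eq_iff)
lemma cadj_mult: "cadj (A ** B) = cadj B ** cadj A"
  by (simp add: cadj_def vec_eq_iff matrix_matrix_mult_def mult.commute)
lemma cadj_add: "cadj (A + B) = cadj A + cadj B"
  by (simp add: cadj_def vec_eq_iff)
lemma cadj_diff: "cadj (A - B) = cadj A - cadj B"
  by (simp add: cadj_def vec_eq_iff)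
lemma cadj_mat: "cadj (mat (of_real r)) = mat (of_real r)"
  by (simp add: cadj_def vec_eq_iff mat_def)
lemma cadj_mat1[simp]: "cadj (mat 1) = mat 1"
  by (simp add: cadj_def vec_eq_iff mat_def)
lemma cadj_sum: "cadj (sum f S) = (\<Sum>i\<in>S. cadj (f i))"
  by (induct S rule: infinite_finite_induct) (auto simp: cadj_add cadj_def vec_eq_iff)

lemma cinner_adj: "cinner x (M *v y) = cinner (cadj M *v x) y"
proof -
  have "cinner x (M *v y) = (\<Sum>i\<in>UNIV. \<Sum>j\<in>UNIV. cnj (x$i) * (M$i$j * y$j))"
    by (simp add: cinner_def matrix_vector_mult_def sum_distrib_left)
  also have "\<dots> = (\<Sum>j\<in>UNIV. \<Sum>i\<in>UNIV. cnj (x$i) * (M$i$j * y$j))" by (rule sum.swap)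
  also have "\<dots> = cinner (cadj M *v x) y"
    by (simp add: cinner_def matrix_vector_mult_def cadj_def sum_distrib_right sum_distrib_left cnj_sum mult_ac)
  finally show ?thesis .
qed
lemma cinner_adj2: "cinner (M *v x) y = cinner x (cadj M *v y)"
  by (simp add: cinner_adj)

lemma matrix_vector_scale: "(M::complex^'n^'m) *v (c *s x) = c *s (M *v x)"
  by (simp add: vec_eq_iff matrix_vector_mult_def sum_distrib_left ac_simps)
lemma matrix_vector_add: "M *v (x + y) = M *v x + M *v y"
  by (simp add: matrix_vector_right_distrib)

definition orthonormal_on :: "'k set \<Rightarrow> ('k \<Rightarrow> complex^'n) \<Rightarrow> bool" where
  "orthonormal_on F u \<longleftrightarrow> (\<forall>i\<in>F. \<forall>j\<in>F. cinner (u i) (u j) = (if i = j then 1 else 0))"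

lemma inner_ii_scale: "inner x (\<i> *s y) = - Im (cinner x y)"
proof -
  have "inner x (\<i> *s y) = Re (cinner x (\<i> *s y))" by (simp add: Re_cinner)
  also have "\<dots> = - Im (cinner x y)" by (simp add: cinner_scale_right)
  finally show ?thesis .
qed

lemma exists_orth:
  fixes u :: "'k \<Rightarrow> complex^'n"
  assumes "finite F" "card F < CARD('n)"
  shows "\<exists>y. y \<noteq> 0 \<and> (\<forall>j\<in>F. cinner (u j) y = 0)"
proof -
  define S where "S = u ` F \<union> (\<lambda>j. \<i> *s u j) ` F"
  have "finite S" using assms by (simp add: S_def)
  have "card S \<le> card (u ` F) + card ((\<lambda>j. \<i> *s u j) ` F)"
    unfolding S_def by (rule card_Un_le)
  also have "\<dots> \<le> card F + card F" by (intro add_mono card_image_le assms)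
  finally have "dim S < DIM(complex^'n)"
    using dim_le_card'[OF \<open>finite S\<close>] assms by simp
  then obtain y where y: "y \<noteq> 0" "\<And>z. z \<in> span S \<Longrightarrow> orthogonal y z"
    using orthogonal_to_subspace_exists by blast
  have "cinner (u j) y = 0" if "j \<in> F" for j
  proof -
    have "inner y (u j) = 0" using y(2)[of "u j"] that by (auto simp: S_def orthogonal_def span_base)
    moreover have "inner y (\<i> *s u j) = 0" using y(2)[of "\<i> *s u j"] that by (auto simp: S_def orthogonal_def span_base)
    ultimately have "Re (cinner y (u j)) = 0" "Im (cinner y (u j)) = 0"
      by (auto simp: Re_cinner inner_ii_scale)
    then have "cinner y (u j) = 0" by (simp add: complex_eq_iff)
    then show ?thesis by (metis cinner_commute complex_cnj_zero)
  qed
  with y show ?thesis by blast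
qed

definition csubspace :: "(complex^'n) set \<Rightarrow> bool" where
  "csubspace S \<longleftrightarrow> 0 \<in> S \<and> (\<forall>x\<in>S. \<forall>y\<in>S. x + y \<in> S) \<and> (\<forall>c x. x \<in> S \<longrightarrow> c *s x \<in> S)"

lemma scaleR_cvec: "r *\<^sub>R (x::complex^'n) = complex_of_real r *s x"
  by (simp add: vec_eq_iff) (simp add: scaleR_conv_of_real)

lemma csubspace_subspace: "csubspace S \<Longrightarrow> subspace S"
  unfolding csubspace_def subspace_def by (simp add: scaleR_cvec)

lemma quad_zero:
  fixes b c :: real
  assumes "\<And>t. 0 \<le> 2*t*b + t^2*c" "0 \<le> c"
  shows "b = 0"
proof -
  define t where "t = -b/(c+1)"
  have "0 \<le> 2*t*b + t^2*c" by (rule assms)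
  then have "0 \<le> (2*t*b + t^2*c) * (c+1)^2" using assms(2) by simp
  also have "(2*t*b + t^2*c) * (c+1)^2 = -(b^2 * (c+2))"
  proof -
    have c1: "c + 1 \<noteq> 0" using assms(2) by simp
    have h: "t*(c+1) = -b" using c1 by (simp add: t_def)
    have "2*t*b*(c+1)^2 = 2*b*(c+1)*(t*(c+1))" by (simp add: power2_eq_square algebra_simps)
    then have e1: "2*t*b*(c+1)^2 = -2*b^2*(c+1)" unfolding h by (simp add: power2_eq_square)
    have "t^2*c*(c+1)^2 = c*(t*(c+1))^2" by (simp add: power2_eq_square algebra_simps)
    then have e2: "t^2*c*(c+1)^2 = b^2*c" unfolding h by simp
    have "(2*t*b + t^2*c) * (c+1)^2 = 2*t*b*(c+1)^2 + t^2*c*(c+1)^2" by (simp add: distrib_right)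
    also have "\<dots> = -2*b^2*(c+1) + b^2*c" by (simp only: e1 e2)
    also have "\<dots> = -(b^2 * (c+2))" by (simp add: algebra_simps)
    finally show ?thesis .
  qed
  finally have "b^2 * (c+2) \<le> 0" by simp
  moreover have "0 < c + 2" using assms by simp
  ultimately have "b^2 \<le> 0" by (simp add: mult_le_0_iff)
  then show ?thesis by simp
qed

lemma herm_real: "cadj H = H \<Longrightarrow> Im (cinner z (H *v z)) = 0"
proof -
  assume h: "cadj H = H"
  have "cinner z (H *v z) = cinner (H *v z) z" using cinner_adj[of z H z] h by simp
  also have "\<dots> = cnj (cinner z (H *v z))" by (rule cinner_commute)
  finally have "Im (cinner z (H *v z)) = Im (cnj (cinner z (H *v z)))" by (rule arg_cong)
  then show ?thesis by simp
qed

lemma psd_on_zero: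
  assumes S: "csubspace S" and D: "cadj D = D"
    and pos: "\<And>z. z \<in> S \<Longrightarrow> 0 \<le> Re (cinner z (D *v z))"
    and x: "x \<in> S" and x0: "Re (cinner x (D *v x)) = 0"
    and y: "y \<in> S"
  shows "cinner y (D *v x) = 0"
proof -
  have key: "Re (cinner w (D *v x)) = 0" if w: "w \<in> S" for w
  proof -
    have adj: "cinner x (D *v w) = cnj (cinner w (D *v x))"
    proof -
      have "cinner x (D *v w) = cinner (D *v x) w" using cinner_adj[of x D w] D by simp
      also have "\<dots> = cnj (cinner w (D *v x))" by (rule cinner_commute)
      finally show ?thesis .
    qed
    have "0 \<le> 2*t*Re (cinner w (D *v x)) + t^2 * Re (cinner w (D *v w))" for t :: real
    proof -
      have "x + complex_of_real t *s w \<in> S" using S x w by (simp add: csubspace_def)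
      then have p: "0 \<le> Re (cinner (x + complex_of_real t *s w) (D *v (x + complex_of_real t *s w)))"
        by (rule pos)
      have e: "cinner (x + complex_of_real t *s w) (D *v (x + complex_of_real t *s w))
        = cinner x (D *v x) + of_real t * cinner x (D *v w) + of_real t * cinner w (D *v x)
          + of_real t * of_real t * cinner w (D *v w)"
        apply (simp only: matrix_vector_add matrix_vector_scale cinner_add_left cinner_add_right
            cinner_scale_left cinner_scale_right complex_cnj_complex_of_real)
        apply (simp only: distrib_left add_ac mult.assoc)
        done
      have "Re (cinner x (D *v x) + of_real t * cinner x (D *v w) + of_real t * cinner w (D *v x)
          + of_real t * of_real t * cinner w (D *v w)) = 2*t*Re (cinner w (D *v x)) + t^2 * Re (cinner w (D *v w))"
      proof -
        have r1: "Re (of_real t * cinner x (D *v w)) = t * Re (cinner w (D *v x))" unfolding adj by simp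
        have r2: "Re (of_real t * cinner w (D *v x)) = t * Re (cinner w (D *v x))" by simp
        have r3: "Re (of_real t * of_real t * cinner w (D *v w)) = t^2 * Re (cinner w (D *v w))"
          by (simp add: power2_eq_square)
        show ?thesis by (simp only: plus_complex.sel x0 r1 r2 r3)
      qed
      then show ?thesis using p unfolding e by linarith
    qed
    then show ?thesis by (rule quad_zero) (rule pos[OF w])
  qed
  have "Re (cinner y (D *v x)) = 0" by (rule key[OF y])
  moreover have "\<i> *s y \<in> S" using S y by (simp add: csubspace_def)
  then have "Re (cinner (\<i> *s y) (D *v x)) = 0" by (rule key)
  then have "Im (cinner y (D *v x)) = 0" by (simp add: cinner_scale_left)
  ultimately show ?thesis by (simp add: complex_eq_iff)
qed

lemma mat_mult_vec: "(mat c :: complex^'n^'n) *v z = c *s z"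
proof -
  have "(\<Sum>j\<in>UNIV. (if i = j then c else 0) * z$j) = c * z$i" for i
  proof -
    have "(\<Sum>j\<in>UNIV. (if i = j then c else 0) * z$j) = (\<Sum>j\<in>UNIV. if i = j then c * z$j else 0)"
      by (rule sum.cong) auto
    also have "\<dots> = c * z$i" by simp
    finally show ?thesis .
  qed
  then show ?thesis by (simp add: vec_eq_iff matrix_vector_mult_def mat_def)
qed

lemma csubspace_diff: "csubspace S \<Longrightarrow> a \<in> S \<Longrightarrow> b \<in> S \<Longrightarrow> a - b \<in> S"
proof -
  assume S: "csubspace S" and a: "a \<in> S" and b: "b \<in> S"
  have "(-1) *s b \<in> S" using S b unfolding csubspace_def by blast
  with a S have "a + (-1) *s b \<in> S" unfolding csubspace_def by blast
  moreover have "a + (-1) *s b = a - b" by (simp add: vec_eq_iff)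
  ultimately show ?thesis by simp
qed

lemma norm_scale_real: "norm (complex_of_real r *s (z::complex^'n)) = \<bar>r\<bar> * norm z"
  by (simp add: scaleR_cvec[symmetric])

lemma herm_eigvec:
  fixes H :: "complex^'n^'n"
  assumes S: "csubspace S" and x0: "x0 \<in> S" "x0 \<noteq> 0" and H: "cadj H = H"
    and inv: "\<And>x. x \<in> S \<Longrightarrow> H *v x \<in> S"
  shows "\<exists>x\<in>S. norm x = 1 \<and> (\<exists>l::real. H *v x = complex_of_real l *s x)"
proof -
  define f where "f x = Re (cinner x (H *v x))" for x
  define K where "K = S \<inter> sphere 0 1"
  have "closed S" using S by (simp add: csubspace_subspace closed_subspace)
  then have "compact K" unfolding K_def by (intro closed_Int_compact compact_sphere)
  define x1 where "x1 = (1 / norm x0) *\<^sub>R x0"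
  have "x1 \<in> S" using x0 S unfolding x1_def scaleR_cvec csubspace_def by blast
  moreover have "norm x1 = 1" using x0 by (simp add: x1_def)
  ultimately have "x1 \<in> K" by (simp add: K_def)
  then have "K \<noteq> {}" by auto
  have "continuous_on K f"
    unfolding f_def cinner_def matrix_vector_mult_def by (intro continuous_intros)
  then obtain x where xK: "x \<in> K" and xmax: "\<And>y. y \<in> K \<Longrightarrow> f y \<le> f x"
    using continuous_attains_sup[OF \<open>compact K\<close> \<open>K \<noteq> {}\<close>] by blast
  define l where "l = f x"
  have xS: "x \<in> S" and nx: "norm x = 1" using xK by (auto simp: K_def)
  have fscale: "f (r *\<^sub>R z) = r^2 * f z" for r z
    unfolding scaleR_cvec by (simp add: f_def matrix_vector_scale cinner_scale_left cinner_scale_right power2_eq_square mult.assoc)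
  have bound: "f z \<le> l * (norm z)^2" if z: "z \<in> S" for z
  proof (cases "z = 0")
    case True then show ?thesis by (simp add: f_def)
  next
    case False
    define r where "r = 1 / norm z"
    have "r *\<^sub>R z \<in> S" using z S unfolding scaleR_cvec csubspace_def by blast
    moreover have "norm (r *\<^sub>R z) = 1" using False by (simp add: r_def)
    ultimately have "r *\<^sub>R z \<in> K" by (simp add: K_def)
    then have "f (r *\<^sub>R z) \<le> l" using xmax by (simp add: l_def)
    then have "r^2 * f z \<le> l" using fscale by simp
    moreover have "r^2 * (norm z)^2 = 1" using False by (simp add: r_def power_divide)
    ultimately have "r^2 * f z * (norm z)^2 \<le> l * (norm z)^2" by (simp add: mult_right_mono)
    then show ?thesis using \<open>r^2 * (norm z)^2 = 1\<close> by (simp add: algebra_simps)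
  qed
  define D where "D = mat (complex_of_real l) - H"
  have Dv: "D *v z = complex_of_real l *s z - H *v z" for z
    by (simp add: D_def matrix_vector_mult_diff_rdistrib mat_mult_vec)
  have Dadj: "cadj D = D" by (simp add: D_def cadj_diff cadj_mat H)
  have Dq: "Re (cinner z (D *v z)) = l * (norm z)^2 - f z" for z
    by (simp add: Dv cinner_diff_right cinner_scale_right cinner_self_real f_def)
  have pos: "0 \<le> Re (cinner z (D *v z))" if "z \<in> S" for z
    using bound[OF that] Dq[of z] by simp
  have x0': "Re (cinner x (D *v x)) = 0" using Dq[of x] nx by (simp add: l_def)
  have DxS: "D *v x \<in> S" unfolding Dv using S xS inv
    by (intro csubspace_diff) (auto simp: csubspace_def)
  have "cinner (D *v x) (D *v x) = 0" by (rule psd_on_zero[OF S Dadj pos xS x0' DxS])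
  then have "D *v x = 0" by (simp add: cinner_self_eq_0)
  then have "H *v x = complex_of_real l *s x" by (simp add: Dv)
  with xS nx show ?thesis by blast
qed

definition msc :: "complex \<Rightarrow> complex^'n^'m \<Rightarrow> complex^'n^'m" where
  "msc c A = (\<chi> i j. c * A$i$j)"

lemma msc_vec: "msc c A *v x = c *s (A *v x)"
  by (simp add: msc_def vec_eq_iff matrix_vector_mult_def sum_distrib_left mult.assoc)
lemma cadj_msc: "cadj (msc c A) = msc (cnj c) (cadj A)"
  by (simp add: msc_def cadj_def vec_eq_iff)

lemma normal_adj_eig:
  assumes N: "W ** cadj W = cadj W ** W" and e: "W *v u = \<mu> *s u"
  shows "cadj W *v u = cnj \<mu> *s u"
proof -
  define n where "n = cinner u u"
  have a: "cinner (cadj W *v u) (cadj W *v u) = \<mu> * cnj \<mu> * n"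
  proof -
    have "cinner (cadj W *v u) (cadj W *v u) = cinner u (W *v (cadj W *v u))"
      using cinner_adj2[of "cadj W" u "cadj W *v u"] by simp
    also have "\<dots> = cinner u (cadj W *v (W *v u))" by (simp add: matrix_vector_mul_assoc N)
    also have "\<dots> = cinner (W *v u) (W *v u)" by (simp add: cinner_adj)
    also have "\<dots> = \<mu> * cnj \<mu> * n" by (simp add: e cinner_scale_left cinner_scale_right n_def)
    finally show ?thesis .
  qed
  have b: "cinner (cadj W *v u) u = \<mu> * n"
    using cinner_adj[of u W u] by (simp add: e cinner_scale_right n_def cinner_adj2)
  have b': "cinner u (cadj W *v u) = cnj \<mu> * n"
    using cinner_adj2[of W u u] by (simp add: e cinner_scale_left n_def)
  have "cinner (cadj W *v u - cnj \<mu> *s u) (cadj W *v u - cnj \<mu> *s u) = 0"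
    by (simp add: cinner_diff_left cinner_diff_right cinner_scale_left cinner_scale_right a b b'
        n_def[symmetric] algebra_simps)
  then show ?thesis by (simp add: cinner_self_eq_0)
qed

lemma csubspace_orth: "csubspace {y. \<forall>j\<in>F. cinner (u j) y = 0}"
  by (simp add: csubspace_def cinner_add_right cinner_scale_right)

lemma normal_eigvec:
  fixes W :: "complex^'n^'n"
  assumes N: "W ** cadj W = cadj W ** W" and S: "csubspace S" and x0: "x0 \<in> S" "x0 \<noteq> 0"
    and inv1: "\<And>x. x \<in> S \<Longrightarrow> W *v x \<in> S" and inv2: "\<And>x. x \<in> S \<Longrightarrow> cadj W *v x \<in> S"
  shows "\<exists>x\<in>S. norm x = 1 \<and> (\<exists>\<mu>. W *v x = \<mu> *s x)"
proof -
  define H1 where "H1 = W + cadj W"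
  define H2 where "H2 = msc \<i> (cadj W - W)"
  have H1v: "H1 *v y = W *v y + cadj W *v y" for y by (simp add: H1_def matrix_vector_mult_add_rdistrib)
  have H2v: "H2 *v y = \<i> *s (cadj W *v y - W *v y)" for y
    by (simp add: H2_def msc_vec matrix_vector_mult_diff_rdistrib)
  have H1a: "cadj H1 = H1" by (simp add: H1_def cadj_add add.commute)
  have H2a: "cadj H2 = H2" 
    by (simp add: H2_def msc_def cadj_def vec_eq_iff algebra_simps)
  have scl: "c *s y \<in> S" if "y \<in> S" for c y using S that by (simp add: csubspace_def)
  have addS: "y + z \<in> S" if "y \<in> S" "z \<in> S" for y z using S that by (simp add: csubspace_def)
  have H1S: "H1 *v y \<in> S" if "y \<in> S" for y unfolding H1v using that inv1 inv2 addS by blast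
  obtain x1 l1 where x1: "x1 \<in> S" "norm x1 = 1" "H1 *v x1 = complex_of_real l1 *s x1"
    using herm_eigvec[OF S x0 H1a H1S] by blast
  define S' where "S' = {y\<in>S. H1 *v y = complex_of_real l1 *s y}"
  have S': "csubspace S'" using S
    by (auto simp: csubspace_def S'_def matrix_vector_add matrix_vector_scale vec_eq_iff algebra_simps)
  have comm: "W *v (cadj W *v y) = cadj W *v (W *v y)" for y by (simp add: matrix_vector_mul_assoc N)
  have W1: "W *v y \<in> S'" if "y \<in> S'" for y
  proof -
    have "H1 *v (W *v y) = W *v (H1 *v y)" by (simp add: H1v matrix_vector_add comm)
    with that show ?thesis by (simp add: S'_def inv1 matrix_vector_scale)
  qed
  have W2: "cadj W *v y \<in> S'" if "y \<in> S'" for y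
  proof -
    have "H1 *v (cadj W *v y) = cadj W *v (H1 *v y)" by (simp add: H1v matrix_vector_add comm)
    with that show ?thesis by (simp add: S'_def inv2 matrix_vector_scale)
  qed
  have H2S: "H2 *v y \<in> S'" if "y \<in> S'" for y
  proof -
    have "cadj W *v y - W *v y \<in> S'" using W1 W2 that S' by (intro csubspace_diff) auto
    then show ?thesis unfolding H2v using S' unfolding csubspace_def by blast
  qed
  have "x1 \<in> S'" "x1 \<noteq> 0" using x1 by (auto simp: S'_def)
  then obtain x l2 where x: "x \<in> S'" "norm x = 1" "H2 *v x = complex_of_real l2 *s x"
    using herm_eigvec[OF S' _ _ H2a H2S] by blast
  have "2 *s (W *v x) = H1 *v x + \<i> *s (H2 *v x)"
    by (simp add: H1v H2v vec_eq_iff algebra_simps)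
  also have "\<dots> = (complex_of_real l1 + \<i> * complex_of_real l2) *s x"
    using x by (simp add: S'_def vec_eq_iff algebra_simps)
  finally have "W *v x = ((complex_of_real l1 + \<i> * complex_of_real l2) / 2) *s x"
    by (simp add: vec_eq_iff field_simps)
  with x show ?thesis by (auto simp: S'_def)
qed

lemma normal_spectral_aux:
  fixes W :: "complex^'n^'n"
  assumes N: "W ** cadj W = cadj W ** W"
  fixes F :: "'n set"
  shows "finite F \<Longrightarrow> \<exists>u \<mu>. orthonormal_on F u \<and> (\<forall>j\<in>F. W *v u j = \<mu> j *s u j)"
proof (induction F rule: finite_induct)
  case empty
  then show ?case by (simp add: orthonormal_on_def)
next
  case (insert a F)
  then obtain u \<mu> where on: "orthonormal_on F u" and ev: "\<forall>j\<in>F. W *v u j = \<mu> j *s u j" by blast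
  have "F \<subset> UNIV" using insert by auto
  then have "card F < CARD('n)" using psubset_card_mono[of UNIV F] by simp
  then obtain y where y: "y \<noteq> 0" "\<forall>j\<in>F. cinner (u j) y = 0"
    using exists_orth[OF insert(1)] by blast
  define S where "S = {y. \<forall>j\<in>F. cinner (u j) y = 0}"
  have S: "csubspace S" unfolding S_def by (rule csubspace_orth)
  have i1: "W *v z \<in> S" if "z \<in> S" for z
  proof -
    have "cinner (u j) (W *v z) = 0" if j: "j \<in> F" for j
    proof -
      have "cinner (u j) (W *v z) = cinner (cadj W *v u j) z" by (rule cinner_adj)
      also have "\<dots> = \<mu> j * cinner (u j) z"
      proof -
        have "cadj W *v u j = cnj (\<mu> j) *s u j" using normal_adj_eig[OF N] ev j by blast
        then show ?thesis by (simp add: cinner_scale_left)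
      qed
      finally show ?thesis using \<open>z \<in> S\<close> j by (simp add: S_def)
    qed
    then show ?thesis by (simp add: S_def)
  qed
  have i2: "cadj W *v z \<in> S" if "z \<in> S" for z
  proof -
    have "cinner (u j) (cadj W *v z) = 0" if j: "j \<in> F" for j
    proof -
      have "cinner (u j) (cadj W *v z) = cinner (W *v u j) z" using cinner_adj[of "u j" "cadj W" z] by simp
      also have "\<dots> = cnj (\<mu> j) * cinner (u j) z"
        using ev j by (simp add: cinner_scale_left)
      finally show ?thesis using \<open>z \<in> S\<close> j by (simp add: S_def)
    qed
    then show ?thesis by (simp add: S_def)
  qed
  have "y \<in> S" using y by (simp add: S_def)
  then obtain x m where x: "x \<in> S" "norm x = 1" "W *v x = m *s x"
    using normal_eigvec[OF N S _ y(1) i1 i2] by blast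
  define u' where "u' = u(a := x)"
  define \<mu>' where "\<mu>' = \<mu>(a := m)"
  have xo: "cinner (u j) x = 0" "cinner x (u j) = 0" if "j \<in> F" for j
    using x(1) that by (auto simp: S_def cinner_commute[of x "u j"])
  have "cinner x x = 1" using x(2) by (simp add: cinner_self_real)
  then have "orthonormal_on (insert a F) u'"
    using on xo insert(2) unfolding orthonormal_on_def u'_def by auto
  moreover have "\<forall>j\<in>insert a F. W *v u' j = \<mu>' j *s u' j"
    using ev x insert(2) by (auto simp: u'_def \<mu>'_def)
  ultimately show ?case by blast
qed

theorem normal_spectral:
  fixes W :: "complex^'n^'n"
  assumes N: "W ** cadj W = cadj W ** W"
  shows "\<exists>(u::'n \<Rightarrow> complex^'n) \<mu>. orthonormal_on UNIV u \<and> (\<forall>j. W *v u j = \<mu> j *s u j)"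
  using normal_spectral_aux[OF N, of UNIV] by auto

definition umat :: "('n \<Rightarrow> complex^'n) \<Rightarrow> complex^'n^'n" where
  "umat u = (\<chi> a j. u j $ a)"

definition cdiag :: "('n \<Rightarrow> complex) \<Rightarrow> complex^'n^'n" where
  "cdiag s = (\<chi> i j. if i = j then s i else 0)"

lemma umat_col: "(M ** umat u) $ a $ j = (M *v u j) $ a"
  by (simp add: umat_def matrix_matrix_mult_def matrix_vector_mult_def)

lemma umat_unitary1:
  fixes u :: "'n \<Rightarrow> complex^'n"
  assumes "orthonormal_on UNIV u" shows "cadj (umat u) ** umat u = mat 1"
  using assms by (simp add: orthonormal_on_def umat_def cadj_def matrix_matrix_mult_def mat_def
      vec_eq_iff cinner_def)

lemma umat_unitary2:
  fixes u :: "'n \<Rightarrow> complex^'n"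
  assumes "orthonormal_on UNIV u" shows "umat u ** cadj (umat u) = mat 1"
  using umat_unitary1[OF assms] matrix_left_right_inverse by blast

lemma cols_eq_imp_eq:
  fixes u :: "'n \<Rightarrow> complex^'n"
  assumes o: "orthonormal_on UNIV u" and e: "\<And>j. M *v u j = N *v u j"
  shows "M = N"
proof -
  have "M ** umat u = N ** umat u" using e by (simp add: vec_eq_iff umat_col)
  then have "M ** umat u ** cadj (umat u) = N ** umat u ** cadj (umat u)" by simp
  then show ?thesis by (simp add: matrix_mul_assoc[symmetric] umat_unitary2[OF o])
qed

lemma umat_mult_axis: "umat u *v (\<chi> k. if k = j then 1 else 0) = u j"
proof -
  have "(\<Sum>k\<in>UNIV. u k $ a * (if k = j then 1 else 0)) = u j $ a" for a
  proof -
    have "(\<Sum>k\<in>UNIV. u k $ a * (if k = j then 1 else 0)) = (\<Sum>k\<in>UNIV. if k = j then u k $ a else 0)"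
      by (rule sum.cong) auto
    then show ?thesis by simp
  qed
  then show ?thesis by (simp add: umat_def matrix_vector_mult_def vec_eq_iff)
qed

lemma cdiag_vec: "cdiag s *v y = (\<chi> i. s i * y $ i)"
proof -
  have "(\<Sum>j\<in>UNIV. (if i = j then s i else 0) * y $ j) = s i * y $ i" for i
  proof -
    have "(\<Sum>j\<in>UNIV. (if i = j then s i else 0) * y $ j) = (\<Sum>j\<in>UNIV. if i = j then s i * y $ j else 0)"
      by (rule sum.cong) auto
    then show ?thesis by simp
  qed
  then show ?thesis by (simp add: cdiag_def matrix_vector_mult_def vec_eq_iff)
qed

lemma cdiag_mult: "cdiag s ** cdiag t = cdiag (\<lambda>i. s i * t i)"
proof -
  have "(\<Sum>k\<in>UNIV. (if i = k then s i else 0) * (if k = j then t k else 0)) = (if i = j then s i * t i else 0)" for i j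
  proof -
    have "(\<Sum>k\<in>UNIV. (if i = k then s i else 0) * (if k = j then t k else 0))
       = (\<Sum>k\<in>UNIV. if k = i then (if i = j then s i * t i else 0) else 0)"
      by (rule sum.cong) auto
    then show ?thesis by simp
  qed
  then show ?thesis by (simp add: cdiag_def matrix_matrix_mult_def vec_eq_iff)
qed

lemma cadj_cdiag: "cadj (cdiag s) = cdiag (\<lambda>i. cnj (s i))"
  by (simp add: cadj_def cdiag_def vec_eq_iff)

lemma trace_cdiag: "trace (cdiag s) = sum s UNIV"
  by (simp add: trace_def cdiag_def)

lemma umat_diag: 
  fixes u :: "'n \<Rightarrow> complex^'n"
  assumes "\<And>j. M *v u j = s j *s u j"
  shows "M ** umat u = umat u ** cdiag s"
proof -
  have l: "(M ** umat u) $ a $ j = s j * u j $ a" for a j by (simp add: umat_col assms)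
  have r: "(umat u ** cdiag s) $ a $ j = s j * u j $ a" for a j
  proof -
    have "(umat u ** cdiag s) $ a $ j = (\<Sum>k\<in>UNIV. u k $ a * (if k = j then s k else 0))"
      by (simp add: matrix_matrix_mult_def umat_def cdiag_def)
    also have "\<dots> = (\<Sum>k\<in>UNIV. if k = j then s j * u j $ a else 0)"
      by (rule sum.cong) auto
    finally show ?thesis by simp
  qed
  show ?thesis using l r by (simp add: vec_eq_iff)
qed

lemma trace_basis:
  fixes u :: "'n \<Rightarrow> complex^'n"
  assumes o: "orthonormal_on UNIV u"
  shows "trace M = (\<Sum>j\<in>UNIV. cinner (u j) (M *v u j))"
proof -
  have "trace M = trace (M ** (umat u ** cadj (umat u)))" by (simp add: umat_unitary2[OF o])
  also have "\<dots> = trace ((M ** umat u) ** cadj (umat u))" by (simp add: matrix_mul_assoc)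
  also have "\<dots> = trace (cadj (umat u) ** (M ** umat u))" by (rule trace_mul_sym)
  also have "\<dots> = (\<Sum>j\<in>UNIV. cinner (u j) (M *v u j))"
    by (simp add: trace_def matrix_matrix_mult_def umat_col cadj_def umat_def cinner_def matrix_vector_mult_def)
  finally show ?thesis .
qed

lemma orth_extend_aux:
  fixes v :: "'n \<Rightarrow> complex^'n"
  assumes o: "orthonormal_on J v"
  shows "finite F \<Longrightarrow> F \<inter> J = {} \<Longrightarrow> \<exists>v'. orthonormal_on (J \<union> F) v' \<and> (\<forall>j\<in>J. v' j = v j)"
proof (induction F rule: finite_induct)
  case empty then show ?case using o by auto
next
  case (insert a F)
  then obtain w where w: "orthonormal_on (J \<union> F) w" "\<forall>j\<in>J. w j = v j" by auto
  have "J \<union> F \<subset> UNIV" using insert by auto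
  then have "card (J \<union> F) < CARD('n)" using psubset_card_mono[of UNIV "J \<union> F"] by simp
  then obtain y where y: "y \<noteq> 0" "\<forall>j\<in>J \<union> F. cinner (w j) y = 0"
    using exists_orth[of "J \<union> F" w] by auto
  define x where "x = (1 / norm y) *\<^sub>R y"
  have nx: "norm x = 1" using y by (simp add: x_def)
  have xo1: "cinner (w j) x = 0" if "j \<in> J \<union> F" for j
    using y that by (auto simp: x_def scaleR_cvec cinner_scale_right)
  have xo: "cinner (w j) x = 0" "cinner x (w j) = 0" if "j \<in> J \<union> F" for j
    using xo1[OF that] cinner_commute[of x "w j"] by auto
  have "cinner x x = 1" using nx by (simp add: cinner_self_real)
  then have "orthonormal_on (J \<union> insert a F) (w(a := x))"
    using w(1) xo insert(2,4) unfolding orthonormal_on_def by auto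
  moreover have "\<forall>j\<in>J. (w(a := x)) j = v j" using w(2) insert(4) by auto
  ultimately show ?case by blast
qed

lemma orth_extend:
  fixes v :: "'n \<Rightarrow> complex^'n"
  assumes o: "orthonormal_on J v"
  shows "\<exists>v'. orthonormal_on UNIV v' \<and> (\<forall>j\<in>J. v' j = v j)"
  using orth_extend_aux[OF o, of "UNIV - J"] by (metis Diff_disjoint Un_Diff_cancel Un_UNIV_right finite
      inf_commute)

lemma cnj_mult_self: "cnj z * (complex_of_real r * z) = complex_of_real (r * (cmod z)^2)"
proof -
  have "cnj z * (complex_of_real r * z) = complex_of_real r * (z * cnj z)" by (simp add: mult_ac)
  also have "\<dots> = complex_of_real r * complex_of_real ((cmod z)^2)" by (simp only: complex_norm_square)
  finally show ?thesis by simp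
qed

lemma cinner_cdiag_real:
  "cinner y (cdiag (\<lambda>j. complex_of_real (s j)) *v y) = complex_of_real (\<Sum>i\<in>UNIV. s i * (cmod (y$i))^2)"
  by (simp add: cdiag_vec cinner_def cnj_mult_self)

lemma axis_scale: "cdiag t *v (\<chi> i. if i = k then 1 else 0) = t k *s (\<chi> i. if i = k then 1 else 0)"
  by (simp add: cdiag_vec vec_eq_iff)

lemma cinner_neg_right: "cinner x (- y) = - cinner x y"
  by (simp add: cinner_def sum_negf)

lemma cinner_adjA: "cinner u (cadj A *v w) = cinner (A *v u) w"
  using cinner_adj[of u "cadj A" w] by simp

lemma mabs_char:
  fixes A :: "complex^'n^'n" and u :: "'n \<Rightarrow> complex^'n"
  assumes o: "orthonormal_on UNIV u" and ev: "\<And>j. (cadj A ** A) *v u j = \<mu> j *s u j"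
  shows "mabs A = umat u ** cdiag (\<lambda>j. complex_of_real (norm (A *v u j))) ** cadj (umat u)"
    and "trace_norm A = (\<Sum>j\<in>UNIV. norm (A *v u j))"
proof -
  define s where "s j = norm (A *v u j)" for j
  define H where "H = cadj A ** A"
  define U where "U = umat u"
  define D where "D = cdiag (\<lambda>j. complex_of_real (s j))"
  define P where "P = U ** D ** cadj U"
  have uu: "cinner (u j) (u j) = 1" for j using o by (simp add: orthonormal_on_def)
  have Hu: "H *v u j = complex_of_real ((s j)^2) *s u j" for j
  proof -
    have "\<mu> j = \<mu> j * cinner (u j) (u j)" by (simp add: uu)
    also have "\<dots> = cinner (u j) (H *v u j)" by (simp add: H_def ev cinner_scale_right)
    also have "\<dots> = cinner (A *v u j) (A *v u j)"
      by (simp add: H_def matrix_vector_mul_assoc[symmetric] cinner_adjA)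
    also have "\<dots> = complex_of_real ((s j)^2)" by (simp add: s_def cinner_self_real)
    finally show ?thesis using ev[of j] by (simp add: H_def)
  qed
  have UU: "cadj U ** U = mat 1" unfolding U_def by (rule umat_unitary1[OF o])
  have Pu: "P *v u k = complex_of_real (s k) *s u k" for k
  proof -
    define e :: "complex^'n" where "e = (\<chi> i. if i = k then 1 else 0)"
    have ue: "U *v e = u k" by (simp add: U_def e_def umat_mult_axis)
    have "P *v u k = (P ** U) *v e" by (simp add: ue[symmetric] matrix_vector_mul_assoc)
    also have "P ** U = U ** D" using UU by (simp add: P_def matrix_mul_assoc[symmetric])
    also have "(U ** D) *v e = U *v (D *v e)" by (simp add: matrix_vector_mul_assoc)
    also have "D *v e = complex_of_real (s k) *s e" by (simp add: D_def e_def axis_scale)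
    finally show ?thesis by (simp add: matrix_vector_scale ue)
  qed
  have Dadj: "cadj D = D" by (simp add: D_def cadj_cdiag)
  have Padj: "cadj P = P" by (simp add: P_def cadj_mult Dadj matrix_mul_assoc)
  have Pq: "cinner x (P *v x) = complex_of_real (\<Sum>i\<in>UNIV. s i * (cmod ((cadj U *v x)$i))^2)" for x
  proof -
    have "cinner x (P *v x) = cinner x (U *v (D *v (cadj U *v x)))"
      by (simp add: P_def matrix_vector_mul_assoc matrix_mul_assoc)
    also have "\<dots> = cinner (cadj U *v x) (D *v (cadj U *v x))" by (rule cinner_adj)
    also have "\<dots> = complex_of_real (\<Sum>i\<in>UNIV. s i * (cmod ((cadj U *v x)$i))^2)"
      unfolding D_def by (rule cinner_cdiag_real)
    finally show ?thesis .
  qed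
  have spos: "0 \<le> s i" for i by (simp add: s_def)
  have Ppsd: "psd P" unfolding psd_def
    using Padj Pq spos by (auto intro!: sum_nonneg)
  have PP: "P ** P = H"
  proof (rule cols_eq_imp_eq[OF o])
    fix j
    show "(P ** P) *v u j = H *v u j"
      by (simp add: matrix_vector_mul_assoc[symmetric] Pu matrix_vector_scale Hu power2_eq_square)
  qed
  have uniq: "Q = P" if Q: "psd Q" "Q ** Q = H" for Q
  proof (rule cols_eq_imp_eq[OF o])
    fix k
    have Qa: "cadj Q = Q" and Qp: "\<And>x. 0 \<le> Re (cinner x (Q *v x))" using Q(1) by (auto simp: psd_def)
    have QQ: "Q *v (Q *v u k) = complex_of_real ((s k)^2) *s u k"
      using Q(2) by (simp add: matrix_vector_mul_assoc Hu)
    have "Q *v u k = complex_of_real (s k) *s u k"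
    proof (cases "s k = 0")
      case True
      have "cinner (Q *v u k) (Q *v u k) = cinner (u k) (Q *v (Q *v u k))"
        using cinner_adjA[of "u k" Q "Q *v u k"] Qa by simp
      also have "\<dots> = 0" using QQ True by simp
      finally show ?thesis using True by (simp add: cinner_self_eq_0)
    next
      case False
      then have sp: "0 < s k" using spos[of k] by simp
      define w where "w = Q *v u k - complex_of_real (s k) *s u k"
      have Qw: "Q *v w = (- complex_of_real (s k)) *s w"
        by (simp add: w_def matrix_vector_mult_diff_distrib matrix_vector_scale QQ vec_eq_iff
            power2_eq_square algebra_simps)
      have "cinner w (Q *v w) = - complex_of_real (s k * (norm w)^2)"
        by (simp add: Qw cinner_scale_right cinner_self_real cinner_neg_right)
      then have "0 \<le> - (s k * (norm w)^2)" using Qp[of w] by simp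
      then have "(norm w)^2 \<le> 0" using sp by (simp add: mult_le_0_iff)
      then have "w = 0" by simp
      then show ?thesis by (simp add: w_def)
    qed
    then show "Q *v u k = P *v u k" by (simp add: Pu)
  qed
  have mP: "mabs A = P"
    unfolding mabs_def H_def[symmetric]
  proof (rule the_equality)
    show "psd P \<and> P ** P = H" using Ppsd PP by blast
    show "\<And>Q. psd Q \<and> Q ** Q = H \<Longrightarrow> Q = P" using uniq by blast
  qed
  then show "mabs A = umat u ** cdiag (\<lambda>j. complex_of_real (norm (A *v u j))) ** cadj (umat u)"
    by (simp only: P_def U_def D_def s_def)
  have "trace P = trace ((U ** D) ** cadj U)" by (simp add: P_def)
  also have "\<dots> = trace (cadj U ** (U ** D))" by (rule trace_mul_sym)
  also have "\<dots> = trace D" by (simp add: matrix_mul_assoc UU)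
  also have "\<dots> = complex_of_real (\<Sum>j\<in>UNIV. s j)" by (simp add: D_def trace_cdiag)
  finally show "trace_norm A = (\<Sum>j\<in>UNIV. norm (A *v u j))"
    by (simp add: trace_norm_def mP s_def)
qed

lemma norm_cscale: "norm (c *s (y::complex^'n)) = cmod c * norm y"
proof -
  have "(norm (c *s y))^2 = (cmod c * norm y)^2"
  proof -
    have "complex_of_real ((norm (c *s y))^2) = cinner (c *s y) (c *s y)" by (simp add: cinner_self_real)
    also have "\<dots> = cnj c * c * cinner y y" by (simp add: cinner_scale_left cinner_scale_right)
    also have "\<dots> = complex_of_real ((cmod c)^2) * complex_of_real ((norm y)^2)"
    proof -
      have "cnj c * c = complex_of_real ((cmod c)^2)" using complex_norm_square[of c] by (simp add: mult.commute)
      then show ?thesis by (simp add: cinner_self_real)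
    qed
    also have "\<dots> = complex_of_real ((cmod c * norm y)^2)" by (simp add: power_mult_distrib)
    finally show ?thesis by (simp only: of_real_eq_iff)
  qed
  then show ?thesis by (simp add: power2_eq_iff_nonneg)
qed

lemma ccs: "cmod (cinner x y) \<le> norm x * norm y"
proof (cases "cinner x y = 0")
  case True then show ?thesis by simp
next
  case False
  define c where "c = cinner x y"
  define p where "p = cnj c / complex_of_real (cmod c)"
  have cp: "cmod p = 1" using False by (simp add: p_def c_def norm_divide)
  have "p * c = complex_of_real (cmod c)"
  proof -
    have "cnj c * c = complex_of_real ((cmod c)^2)" using complex_norm_square[of c] by (simp add: mult.commute)
    then have "p * c = complex_of_real ((cmod c)^2) / complex_of_real (cmod c)" by (simp add: p_def)
    also have "\<dots> = complex_of_real (cmod c)" using False by (simp add: c_def power2_eq_square)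
    finally show ?thesis .
  qed
  then have "cinner x (p *s y) = complex_of_real (cmod c)" by (simp add: cinner_scale_right c_def)
  then have "cmod c = inner x (p *s y)" using Re_cinner[of x "p *s y"] by simp
  also have "\<dots> \<le> norm x * norm (p *s y)" by (rule norm_cauchy_schwarz)
  also have "\<dots> = norm x * norm y" by (simp add: norm_cscale cp)
  finally show ?thesis by (simp add: c_def)
qed

lemma norm_le_l1_c: "norm (x::complex^'n) \<le> (\<Sum>i\<in>UNIV. cmod (x$i))"
  unfolding norm_vec_def by (rule L2_set_le_sum) auto

lemma unit_ex: "\<exists>x::complex^'n. norm x = 1"
proof -
  obtain k :: 'n where True by blast
  define e :: "complex^'n" where "e = (\<chi> i. if i = k then 1 else 0)"
  have "cinner e e = 1" by (simp add: e_def cinner_def if_distrib cong: if_cong)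
  then have "complex_of_real ((norm e)^2) = 1" by (simp only: cinner_self_real)
  then have "(norm e)^2 = 1" using of_real_eq_1_iff by blast
  then have "norm e = 1 \<or> norm e = -1" using power2_eq_1_iff by blast
  then have "norm e = 1" using norm_ge_zero[of e] by linarith
  then show ?thesis by blast
qed

lemma numrad_bdd: "bdd_above ((\<lambda>x. cmod (cinner x (A *v x))) ` {x::complex^'n. norm x = 1})"
proof (rule bdd_aboveI2)
  fix x :: "complex^'n" assume "x \<in> {x. norm x = 1}"
  then have nx: "norm x = 1" by simp
  have "cmod (cinner x (A *v x)) \<le> norm x * norm (A *v x)" by (rule ccs)
  also have "\<dots> = norm (A *v x)" using nx by simp
  also have "\<dots> \<le> (\<Sum>a\<in>UNIV. cmod ((A *v x)$a))" by (rule norm_le_l1_c)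
  also have "\<dots> \<le> (\<Sum>a\<in>UNIV. \<Sum>b\<in>UNIV. cmod (A$a$b))"
  proof (rule sum_mono)
    fix a
    have "cmod ((A *v x)$a) \<le> (\<Sum>b\<in>UNIV. cmod (A$a$b * x$b))"
      unfolding matrix_vector_mult_def by (simp add: norm_sum)
    also have "\<dots> \<le> (\<Sum>b\<in>UNIV. cmod (A$a$b))"
    proof (rule sum_mono)
      fix b
      have "cmod (x$b) \<le> norm x" by (rule Finite_Cartesian_Product.norm_nth_le)
      then have "cmod (x$b) \<le> 1" using nx by simp
      then show "cmod (A$a$b * x$b) \<le> cmod (A$a$b)"
        by (simp add: norm_mult mult_left_le)
    qed
    finally show "cmod ((A *v x)$a) \<le> (\<Sum>b\<in>UNIV. cmod (A$a$b))" .
  qed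
  finally show "cmod (cinner x (A *v x)) \<le> (\<Sum>a\<in>UNIV. \<Sum>b\<in>UNIV. cmod (A$a$b))" .
qed

lemma numrad_ge: "norm x = 1 \<Longrightarrow> cmod (cinner x (A *v x)) \<le> numrad A"
  unfolding numrad_def by (rule cSUP_upper) (auto simp: numrad_bdd)

lemma numrad_le: "(\<And>x. norm (x::complex^'n) = 1 \<Longrightarrow> cmod (cinner x (A *v x)) \<le> c) \<Longrightarrow> numrad A \<le> c"
  unfolding numrad_def using unit_ex by (intro cSUP_least) auto

lemma numrad_nonneg: "0 \<le> numrad (A::complex^'n^'n)"
proof -
  obtain x :: "complex^'n" where "norm x = 1" using unit_ex by blast
  then show ?thesis using numrad_ge[of x A] norm_ge_zero[of "cinner x (A *v x)"] by linarith
qed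

lemma numrad_scaled: "cmod (cinner y (A *v y)) \<le> numrad A * (norm y)^2"
proof (cases "y = 0")
  case True then show ?thesis by simp
next
  case False
  define x where "x = (1 / norm y) *\<^sub>R y"
  have nx: "norm x = 1" using False by (simp add: x_def)
  have yx: "y = complex_of_real (norm y) *s x" using False
    by (simp add: x_def scaleR_cvec vec_eq_iff)
  have "cinner y (A *v y) = complex_of_real ((norm y)^2) * cinner x (A *v x)"
    by (subst (1 2) yx) (simp add: matrix_vector_scale cinner_scale_left cinner_scale_right power2_eq_square)
  then have "cmod (cinner y (A *v y)) = (norm y)^2 * cmod (cinner x (A *v x))"
    by (simp add: norm_mult norm_power)
  also have "\<dots> \<le> (norm y)^2 * numrad A" by (intro mult_left_mono numrad_ge nx) simp
  finally show ?thesis by (simp add: mult.commute)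
qed

lemma umat_axis': "umat u *v (\<chi> i. if i = j then 1 else 0) = u j" by (rule umat_mult_axis)

lemma adj_umat_col:
  fixes V :: "'n \<Rightarrow> complex^'n"
  assumes o: "orthonormal_on UNIV V"
  shows "cadj (umat V) *v V j = (\<chi> i. if i = j then 1 else 0)"
proof -
  have "cadj (umat V) *v V j = cadj (umat V) *v (umat V *v (\<chi> i. if i = j then 1 else 0))"
    by (simp add: umat_mult_axis)
  also have "\<dots> = (\<chi> i. if i = j then 1 else 0)"
    by (simp add: matrix_vector_mul_assoc umat_unitary1[OF o])
  finally show ?thesis .
qed

theorem trace_norm_le:
  fixes A :: "complex^'n^'n"
  shows "trace_norm A \<le> real CARD('n) * numrad A"
proof -
  define H where "H = cadj A ** A"
  have Ha: "cadj H = H" by (simp add: H_def cadj_mult)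
  have "H ** cadj H = cadj H ** H" by (simp add: Ha)
  then obtain u :: "'n \<Rightarrow> complex^'n" and \<mu> where o: "orthonormal_on UNIV u"
    and ev: "\<And>j. H *v u j = \<mu> j *s u j"
    using normal_spectral by blast
  define s where "s j = norm (A *v u j)" for j
  have tn: "trace_norm A = (\<Sum>j\<in>UNIV. s j)"
    using mabs_char(2)[OF o, of A \<mu>] ev by (simp add: H_def s_def)
  have AA: "cinner (A *v u i) (A *v u j) = (if i = j then complex_of_real ((s j)^2) else 0)" for i j
  proof (cases "i = j")
    case True then show ?thesis by (simp add: s_def cinner_self_real)
  next
    case False
    have "cinner (A *v u i) (A *v u j) = cinner (u i) (H *v u j)"
      by (simp add: H_def matrix_vector_mul_assoc[symmetric] cinner_adjA)
    also have "\<dots> = 0" using o False by (simp add: ev cinner_scale_right orthonormal_on_def)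
    finally show ?thesis using False by simp
  qed
  define J where "J = {j. s j \<noteq> 0}"
  define v where "v j = complex_of_real (1 / s j) *s (A *v u j)" for j
  have "orthonormal_on J v"
    unfolding orthonormal_on_def
  proof (intro ballI)
    fix i j assume "i \<in> J" "j \<in> J"
    then show "cinner (v i) (v j) = (if i = j then 1 else 0)"
      by (simp add: v_def cinner_scale_left cinner_scale_right AA J_def power2_eq_square)
  qed
  then obtain V where oV: "orthonormal_on UNIV V" and VJ: "\<And>j. j \<in> J \<Longrightarrow> V j = v j"
    using orth_extend by blast
  have Au: "A *v u j = complex_of_real (s j) *s V j" for j
  proof (cases "j \<in> J")
    case True
    then have "s j \<noteq> 0" by (simp add: J_def)
    then show ?thesis using True by (simp add: VJ v_def vec_eq_iff)
  next
    case False
    then have "norm (A *v u j) = 0" by (simp add: J_def s_def)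
    then show ?thesis using False by (simp add: J_def)
  qed
  define W where "W = umat V ** cadj (umat u)"
  have cW: "cadj W = umat u ** cadj (umat V)" by (simp add: W_def cadj_mult)
  have W1: "cadj W ** W = mat 1"
  proof -
    have "cadj W ** W = umat u ** (cadj (umat V) ** umat V) ** cadj (umat u)"
      unfolding cW unfolding W_def by (simp only: matrix_mul_assoc)
    then show ?thesis by (simp add: umat_unitary1[OF oV] umat_unitary2[OF o])
  qed
  have W2: "W ** cadj W = mat 1"
    using W1 matrix_left_right_inverse by blast
  have WA: "(cadj W ** A) *v u j = complex_of_real (s j) *s u j" for j
  proof -
    have "(cadj W ** A) *v u j = umat u *v (cadj (umat V) *v (A *v u j))"
      by (simp add: cW matrix_vector_mul_assoc matrix_mul_assoc)
    also have "\<dots> = complex_of_real (s j) *s u j"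
      by (simp add: Au matrix_vector_scale adj_umat_col[OF oV] umat_mult_axis)
    finally show ?thesis .
  qed
  have tr1: "trace (cadj W ** A) = complex_of_real (\<Sum>j\<in>UNIV. s j)"
  proof -
    have "trace (cadj W ** A) = (\<Sum>j\<in>UNIV. cinner (u j) ((cadj W ** A) *v u j))"
      by (rule trace_basis[OF o])
    also have "\<dots> = (\<Sum>j\<in>UNIV. complex_of_real (s j))"
      using o by (simp add: WA cinner_scale_right orthonormal_on_def)
    finally show ?thesis by simp
  qed
  have "W ** cadj W = cadj W ** W" by (simp add: W1 W2)
  then obtain w :: "'n \<Rightarrow> complex^'n" and m where ow: "orthonormal_on UNIV w"
    and evw: "\<And>k. W *v w k = m k *s w k"
    using normal_spectral by blast
  have ww: "cinner (w k) (w k) = 1" for k using ow by (simp add: orthonormal_on_def)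
  have nw: "norm (w k) = 1" for k
  proof -
    have "complex_of_real ((norm (w k))^2) = 1" using ww[of k] by (simp only: cinner_self_real)
    then have "(norm (w k))^2 = 1" using of_real_eq_1_iff by blast
    then have "norm (w k) = 1 \<or> norm (w k) = -1" using power2_eq_1_iff by blast
    then show ?thesis using norm_ge_zero[of "w k"] by linarith
  qed
  have mk: "cmod (m k) = 1" for k
  proof -
    have "cinner (W *v w k) (W *v w k) = cinner (w k) ((cadj W ** W) *v w k)"
      by (simp add: cinner_adj2 matrix_vector_mul_assoc)
    also have "\<dots> = 1" by (simp add: W1 ww)
    finally have "cnj (m k) * m k = 1" by (simp add: evw cinner_scale_left cinner_scale_right ww mult.commute)
    then have "complex_of_real ((cmod (m k))^2) = 1" using complex_norm_square[of "m k"] by (simp add: mult.commute)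
    then have "(cmod (m k))^2 = 1" using of_real_eq_1_iff by blast
    then have "cmod (m k) = 1 \<or> cmod (m k) = -1" using power2_eq_1_iff by blast
    then show ?thesis using norm_ge_zero[of "m k"] by linarith
  qed
  have tr2: "trace (cadj W ** A) = (\<Sum>k\<in>UNIV. cnj (m k) * cinner (w k) (A *v w k))"
  proof -
    have "trace (cadj W ** A) = (\<Sum>k\<in>UNIV. cinner (w k) ((cadj W ** A) *v w k))"
      by (rule trace_basis[OF ow])
    also have "\<dots> = (\<Sum>k\<in>UNIV. cinner (W *v w k) (A *v w k))"
      by (simp add: matrix_vector_mul_assoc[symmetric] cinner_adjA)
    also have "\<dots> = (\<Sum>k\<in>UNIV. cnj (m k) * cinner (w k) (A *v w k))"
      by (simp add: evw cinner_scale_left)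
    finally show ?thesis .
  qed
  have "(\<Sum>j\<in>UNIV. s j) \<ge> 0" by (simp add: sum_nonneg s_def)
  then have "cmod (complex_of_real (\<Sum>j\<in>UNIV. s j)) = (\<Sum>j\<in>UNIV. s j)"
    by (simp only: norm_of_real abs_of_nonneg)
  then have "trace_norm A = cmod (trace (cadj W ** A))"
    unfolding tr1 tn by simp
  also have "\<dots> \<le> (\<Sum>k\<in>UNIV. cmod (cnj (m k) * cinner (w k) (A *v w k)))"
    unfolding tr2 by (rule norm_sum)
  also have "\<dots> \<le> of_nat (card (UNIV::'n set)) * numrad A"
  proof (rule sum_bounded_above)
    fix k :: 'n
    show "cmod (cnj (m k) * cinner (w k) (A *v w k)) \<le> numrad A"
      by (simp add: norm_mult mk numrad_ge nw)
  qed
  finally show ?thesis .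
qed

lemma sum_mvec: "(sum f S :: complex^'n^'m) *v x = (\<Sum>i\<in>S. f i *v x)"
  by (induct S rule: infinite_finite_induct) (simp_all add: matrix_vector_mult_add_rdistrib)

lemma polar_zero:
  fixes A :: "complex^'n^'n"
  assumes q: "\<And>y. cinner y (A *v y) = 0"
  shows "A = 0"
proof -
  have key: "cinner x (A *v y) = 0" for x y
  proof -
    have ex: "cinner (x + c *s y) (A *v (x + c *s y)) = c * cinner x (A *v y) + cnj c * cinner y (A *v x)" for c
      using q[of x] q[of y]
      by (simp add: matrix_vector_add matrix_vector_scale cinner_add_left cinner_add_right
          cinner_scale_left cinner_scale_right)
    have 1: "cinner x (A *v y) + cinner y (A *v x) = 0" using ex[of 1] q[of "x + 1 *s y"] by simp
    have 2: "\<i> * cinner x (A *v y) - \<i> * cinner y (A *v x) = 0" using ex[of \<i>] q[of "x + \<i> *s y"] by simp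
    from 1 2 show ?thesis by (simp add: algebra_simps)
  qed
  have "A *v y = 0 *v y" for y using key[of "A *v y" y] by (simp add: cinner_self_eq_0)
  then show ?thesis by (simp add: matrix_eq)
qed

lemma numrad_zero_iff: "numrad (A::complex^'n^'n) = 0 \<longleftrightarrow> A = 0"
proof
  assume "numrad A = 0"
  then have "cinner y (A *v y) = 0" for y using numrad_scaled[of y A] by simp
  then show "A = 0" by (rule polar_zero)
next
  assume "A = 0"
  then have "numrad A \<le> 0" by (intro numrad_le) simp
  then show "numrad A = 0" using numrad_nonneg[of A] by simp
qed

lemma numrad_msc: "numrad (msc c (A::complex^'n^'n)) = cmod c * numrad A"
proof -
  have le: "numrad (msc c B) \<le> cmod c * numrad B" for c and B :: "complex^'n^'n"
    by (rule numrad_le) (simp add: msc_vec cinner_scale_right norm_mult mult_left_mono numrad_ge)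
  show ?thesis
  proof (cases "c = 0")
    case True
    then show ?thesis using le[of 0 A] numrad_nonneg[of "msc 0 A"] by simp
  next
    case False
    have "msc (1/c) (msc c A) = A" using False by (simp add: msc_def vec_eq_iff)
    then have "numrad A \<le> cmod (1/c) * numrad (msc c A)" using le[of "1/c" "msc c A"] by simp
    then have "cmod c * numrad A \<le> numrad (msc c A)" using False
      by (simp add: norm_divide field_simps)
    then show ?thesis using le[of c A] by simp
  qed
qed

lemma numrad_triangle: "numrad ((A::complex^'n^'n) + B) \<le> numrad A + numrad B"
proof (rule numrad_le)
  fix x :: "complex^'n" assume nx: "norm x = 1"
  have "cmod (cinner x ((A + B) *v x)) = cmod (cinner x (A *v x) + cinner x (B *v x))"
    by (simp add: matrix_vector_mult_add_rdistrib cinner_add_right)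
  also have "\<dots> \<le> cmod (cinner x (A *v x)) + cmod (cinner x (B *v x))" by (rule norm_triangle_ineq)
  also have "\<dots> \<le> numrad A + numrad B" using numrad_ge[OF nx] by (intro add_mono) auto
  finally show "cmod (cinner x ((A + B) *v x)) \<le> numrad A + numrad B" .
qed

lemma card_pos: "0 < real CARD('n::finite)" by simp

theorem part1: "is_M_norm (\<lambda>A::complex^'n^'n. real CARD('n) * numrad A)"
  unfolding is_M_norm_def is_matrix_norm_def
proof (intro conjI allI impI)
  fix A :: "complex^'n^'n"
  show "0 \<le> real CARD('n) * numrad A" by (simp add: numrad_nonneg)
  show "(real CARD('n) * numrad A = 0) = (A = 0)" by (simp add: numrad_zero_iff)
next
  fix c :: complex and A :: "complex^'n^'n"
  show "real CARD('n) * numrad (\<chi> i j. c * A $ i $ j) = cmod c * (real CARD('n) * numrad A)"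
    using numrad_msc[of c A] by (simp add: msc_def)
next
  fix A B :: "complex^'n^'n"
  show "real CARD('n) * numrad (A + B) \<le> real CARD('n) * numrad A + real CARD('n) * numrad B"
    using numrad_triangle[of A B] by (simp add: distrib_left[symmetric])
next
  fix k :: nat and X C :: "nat \<Rightarrow> complex^'n^'n"
  assume sC: "(\<Sum>i<k. cadj (C i) ** C i) = mat 1"
  define M where "M = Max ((\<lambda>i. real CARD('n) * numrad (X i)) ` {..<k})"
  have "k \<noteq> 0"
  proof
    assume "k = 0"
    then have "(mat 1 :: complex^'n^'n) = 0" using sC by simp
    then have "(mat 1 :: complex^'n^'n) $ undefined $ undefined = 0" by simp
    then show False by (simp add: mat_def)
  qed
  have XM: "numrad (X i) \<le> M / real CARD('n)" if "i < k" for i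
  proof -
    have "real CARD('n) * numrad (X i) \<le> M" unfolding M_def using that by (intro Max_ge) auto
    then show ?thesis by (simp add: field_simps)
  qed
  have "numrad (\<Sum>i<k. cadj (C i) ** X i ** C i) \<le> M / real CARD('n)"
  proof (rule numrad_le)
    fix x :: "complex^'n" assume nx: "norm x = 1"
    have e1: "cinner x ((\<Sum>i<k. cadj (C i) ** X i ** C i) *v x) = (\<Sum>i<k. cinner (C i *v x) (X i *v (C i *v x)))"
      by (simp add: sum_mvec cinner_sum_right matrix_vector_mul_assoc[symmetric] cinner_adjA)
    have "complex_of_real (\<Sum>i<k. (norm (C i *v x))^2) = (\<Sum>i<k. cinner (C i *v x) (C i *v x))"
      by (simp add: cinner_self_real)
    also have "\<dots> = cinner x ((\<Sum>i<k. cadj (C i) ** C i) *v x)"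
      by (simp add: sum_mvec cinner_sum_right matrix_vector_mul_assoc[symmetric] cinner_adjA)
    also have "\<dots> = 1" using nx by (simp add: sC cinner_self_real)
    finally have s1: "(\<Sum>i<k. (norm (C i *v x))^2) = 1" using of_real_eq_1_iff by blast
    have "cmod (cinner x ((\<Sum>i<k. cadj (C i) ** X i ** C i) *v x)) \<le> (\<Sum>i<k. cmod (cinner (C i *v x) (X i *v (C i *v x))))"
      unfolding e1 by (rule norm_sum)
    also have "\<dots> \<le> (\<Sum>i<k. M / real CARD('n) * (norm (C i *v x))^2)"
    proof (rule sum_mono)
      fix i assume "i \<in> {..<k}"
      then have "numrad (X i) \<le> M / real CARD('n)" using XM by simp
      then have "numrad (X i) * (norm (C i *v x))^2 \<le> M / real CARD('n) * (norm (C i *v x))^2"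
        by (intro mult_right_mono) auto
      then show "cmod (cinner (C i *v x) (X i *v (C i *v x))) \<le> M / real CARD('n) * (norm (C i *v x))^2"
        using numrad_scaled[of "C i *v x" "X i"] by linarith
    qed
    also have "\<dots> = M / real CARD('n) * (\<Sum>i<k. (norm (C i *v x))^2)"
      by (rule sum_distrib_left[symmetric])
    also have "\<dots> = M / real CARD('n)" using s1 by simp
    finally show "cmod (cinner x ((\<Sum>i<k. cadj (C i) ** X i ** C i) *v x)) \<le> M / real CARD('n)" .
  qed
  then have "real CARD('n) * numrad (\<Sum>i<k. cadj (C i) ** X i ** C i) \<le> M"
    by (simp add: field_simps)
  then show "real CARD('n) * numrad (\<Sum>i<k. cadj (C i) ** X i ** C i)
         \<le> Max ((\<lambda>i. real CARD('n) * numrad (X i)) ` {..<k})"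
    unfolding M_def .
qed

definition cvec :: "'n \<Rightarrow> complex^'n \<Rightarrow> complex^'n^'n" where
  "cvec j x = (\<chi> a b. if b = j then x$a else 0)"

lemma cvec_entry:
  "(cadj (cvec j x) ** Y ** cvec j x) $ b $ b' = (if b = j \<and> b' = j then cinner x (Y *v x) else 0)"
proof -
  have "(cadj (cvec j x) ** Y ** cvec j x) $ b $ b'
      = (\<Sum>c\<in>UNIV. (\<Sum>a\<in>UNIV. cnj (if b = j then x$a else 0) * Y$a$c) * (if b' = j then x$c else 0))"
    by (simp add: matrix_matrix_mult_def cadj_def cvec_def)
  also have "\<dots> = (if b = j \<and> b' = j then (\<Sum>c\<in>UNIV. (\<Sum>a\<in>UNIV. cnj (x$a) * Y$a$c) * x$c) else 0)"
    by auto
  also have "(\<Sum>c\<in>UNIV. (\<Sum>a\<in>UNIV. cnj (x$a) * Y$a$c) * x$c) = cinner x (Y *v x)"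
  proof -
    have "(\<Sum>c\<in>UNIV. (\<Sum>a\<in>UNIV. cnj (x$a) * Y$a$c) * x$c) = (\<Sum>c\<in>UNIV. \<Sum>a\<in>UNIV. cnj (x$a) * (Y$a$c * x$c))"
      by (simp add: sum_distrib_right mult.assoc)
    also have "\<dots> = (\<Sum>a\<in>UNIV. \<Sum>c\<in>UNIV. cnj (x$a) * (Y$a$c * x$c))" by (rule sum.swap)
    also have "\<dots> = cinner x (Y *v x)" by (simp add: cinner_def matrix_vector_mult_def sum_distrib_left)
    finally show ?thesis .
  qed
  finally show ?thesis .
qed

lemma sum_bij_delta:
  assumes g: "bij_betw g {..<n} (UNIV::'n::finite set)"
  shows "(\<Sum>i<n. if b = g i \<and> b' = g i then c else 0) = (if b = b' then c else (0::complex))"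
proof -
  have "(\<Sum>i<n. (\<lambda>y. if b = y \<and> b' = y then c else 0) (g i)) = (\<Sum>y\<in>UNIV. if b = y \<and> b' = y then c else 0)"
    using sum.reindex_bij_betw[OF g, of "\<lambda>y. if b = y \<and> b' = y then c else 0"] by simp
  also have "\<dots> = (if b = b' then c else 0)"
  proof (cases "b = b'")
    case True
    have "(\<Sum>y\<in>UNIV. if b = y \<and> b' = y then c else 0) = (\<Sum>y\<in>UNIV. if y = b then c else 0)"
      using True by (intro sum.cong) auto
    also have "\<dots> = c" by (simp add: sum.delta)
    finally show ?thesis using True by simp
  next
    case False then show ?thesis by (auto intro!: sum.neutral)
  qed
  finally show ?thesis .
qed

lemma sum_cvec:
  assumes g: "bij_betw g {..<CARD('n)} (UNIV::'n set)"
  shows "(\<Sum>i<CARD('n). cadj (cvec (g i) x) ** Y ** cvec (g i) x) = msc (cinner x (Y *v x)) (mat 1 :: complex^'n^'n)"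
proof -
  have "(\<Sum>i<CARD('n). cadj (cvec (g i) x) ** Y ** cvec (g i) x) $ b $ b' = msc (cinner x (Y *v x)) (mat 1 :: complex^'n^'n) $ b $ b'" for b b'
  proof -
    have "(\<Sum>i<CARD('n). cadj (cvec (g i) x) ** Y ** cvec (g i) x) $ b $ b'
        = (\<Sum>i<CARD('n). (cadj (cvec (g i) x) ** Y ** cvec (g i) x) $ b $ b')"
      by (simp add: sum_component)
    also have "\<dots> = (\<Sum>i<CARD('n). if b = g i \<and> b' = g i then cinner x (Y *v x) else 0)"
      by (simp add: cvec_entry)
    also have "\<dots> = (if b = b' then cinner x (Y *v x) else 0)" by (rule sum_bij_delta[OF g])
    finally show ?thesis by (simp add: msc_def mat_def)
  qed
  then show ?thesis by (simp add: vec_eq_iff)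
qed

lemma trace_norm_scalar: "trace_norm (msc c (mat 1 :: complex^'n^'n)) = real CARD('n) * cmod c"
proof -
  define e :: "'n \<Rightarrow> complex^'n" where "e j = (\<chi> i. if i = j then 1 else 0)" for j
  have cie: "cinner (e i) (e j) = (if i = j then 1 else 0)" for i j
  proof -
    have "cinner (e i) (e j) = (\<Sum>a\<in>UNIV. if a = i \<and> a = j then 1 else 0)"
      unfolding cinner_def by (intro sum.cong) (auto simp: e_def)
    also have "\<dots> = (if i = j then 1 else 0)"
    proof (cases "i = j")
      case True
      then have "(\<Sum>a\<in>UNIV. if a = i \<and> a = j then 1 else 0) = (\<Sum>a\<in>UNIV. if a = i then (1::complex) else 0)"
        by (intro sum.cong) auto
      then show ?thesis using True by simp
    qed (auto intro!: sum.neutral)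
    finally show ?thesis .
  qed
  have o: "orthonormal_on UNIV e" by (simp add: orthonormal_on_def cie)
  define B where "B = msc c (mat 1 :: complex^'n^'n)"
  have Bv: "B *v y = c *s y" for y by (simp add: B_def msc_vec)
  have ev: "(cadj B ** B) *v e j = (cnj c * c) *s e j" for j
    by (simp add: matrix_vector_mul_assoc[symmetric] Bv B_def cadj_msc msc_vec vec_eq_iff mult_ac)
  have ne: "norm (e j) = 1" for j
  proof -
    have "complex_of_real ((norm (e j))^2) = 1" using cie[of j j] by (simp only: cinner_self_real) simp
    then have "(norm (e j))^2 = 1" using of_real_eq_1_iff by blast
    then have "norm (e j) = 1 \<or> norm (e j) = -1" using power2_eq_1_iff by blast
    then show ?thesis using norm_ge_zero[of "e j"] by linarith
  qed
  have "trace_norm B = (\<Sum>j\<in>UNIV. norm (B *v e j))" using mabs_char(2)[OF o ev] .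
  also have "\<dots> = (\<Sum>j\<in>(UNIV::'n set). cmod c)" by (simp add: Bv norm_cscale ne)
  also have "\<dots> = real CARD('n) * cmod c" by simp
  finally show ?thesis by (simp add: B_def)
qed

theorem part3:
  fixes N :: "complex^'n^'n \<Rightarrow> real"
  assumes MN: "is_M_norm N" and tn: "\<And>A. trace_norm A \<le> N A"
  shows "real CARD('n) * numrad A \<le> N A"
proof -
  obtain g where g: "bij_betw g {0..<card (UNIV::'n set)} (UNIV::'n set)"
    using ex_bij_betw_nat_finite[of "UNIV::'n set"] by auto
  then have g': "bij_betw g {..<CARD('n)} (UNIV::'n set)" by (simp add: atLeast0LessThan)
  have Mp: "\<And>(k::nat) (X::nat \<Rightarrow> complex^'n^'n) (C::nat \<Rightarrow> complex^'n^'n). (\<Sum>i<k. cadj (C i) ** C i) = mat 1 \<Longrightarrow>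
        N (\<Sum>i<k. cadj (C i) ** X i ** C i) \<le> Max ((\<lambda>i. N (X i)) ` {..<k})"
    using MN unfolding is_M_norm_def by blast
  have "numrad A \<le> N A / real CARD('n)"
  proof (rule numrad_le)
    fix x :: "complex^'n" assume nx: "norm x = 1"
    define C where "C i = cvec (g i) x" for i
    have s1: "(\<Sum>i<CARD('n). cadj (C i) ** C i) = mat 1"
    proof -
      have "(\<Sum>i<CARD('n). cadj (C i) ** C i) = (\<Sum>i<CARD('n). cadj (C i) ** mat 1 ** C i)" by simp
      also have "\<dots> = msc (cinner x (mat 1 *v x)) (mat 1)" unfolding C_def by (rule sum_cvec[OF g'])
      also have "\<dots> = mat 1"
      proof -
        have "cinner x (mat 1 *v x) = 1" using nx by (simp add: cinner_self_real)
        then show ?thesis by (simp add: msc_def mat_def vec_eq_iff)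
      qed
      finally show ?thesis .
    qed
    have s2: "(\<Sum>i<CARD('n). cadj (C i) ** (\<lambda>i. A) i ** C i) = msc (cinner x (A *v x)) (mat 1)"
      unfolding C_def by (simp add: sum_cvec[OF g'])
    have "N (msc (cinner x (A *v x)) (mat 1)) \<le> Max ((\<lambda>i. N ((\<lambda>i. A) i)) ` {..<CARD('n)})"
      using Mp[OF s1, of "\<lambda>i. A"] unfolding s2 .
    also have "\<dots> = N A"
    proof -
      have "0 \<in> {..<CARD('n)}" by simp
      then have "(\<lambda>i. N A) ` {..<CARD('n)} = {N A}" by (auto intro: image_eqI[of _ _ 0])
      then show ?thesis by simp
    qed
    finally have "N (msc (cinner x (A *v x)) (mat 1)) \<le> N A" .
    moreover have "real CARD('n) * cmod (cinner x (A *v x)) \<le> N (msc (cinner x (A *v x)) (mat 1))"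
      using tn[of "msc (cinner x (A *v x)) (mat 1)"] by (simp add: trace_norm_scalar)
    ultimately show "cmod (cinner x (A *v x)) \<le> N A / real CARD('n)"
      by (simp add: field_simps)
  qed
  then show ?thesis by (simp add: field_simps)
qed

theorem theorem3p7:
  shows "is_M_norm (\<lambda>A::complex^'n^'n. real CARD('n) * numrad A)
     \<and> (\<forall>A::complex^'n^'n. trace_norm A \<le> real CARD('n) * numrad A)
     \<and> (\<forall>N::complex^'n^'n \<Rightarrow> real. is_M_norm N \<and> (\<forall>A. trace_norm A \<le> N A)
            \<longrightarrow> (\<forall>A. real CARD('n) * numrad A \<le> N A))"
  using part1 trace_norm_le part3 by blast

end
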